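(* Let $\mathsf P$ be a network coding problem, $q$ a prime power, and $h\in\mathcal H[\mathcal S\cup\mathcal E]$ a $q$-representable function with $h\in\mathcal C_I(\mathsf P)\cap\mathcal C_T(\mathsf P)\cap\mathcal C_D(\mathsf P)$. Then the rate-capacity tuple $(\lambda,\omega)=\mathrm{proj}_{\mathsf P}[h]$ is $0$-achievable by $q$-linear network codes (i.e. $0$-achievable subject to the $q$-linearity constraint).
   Context: A network is $\mathsf G=(\mathcal V,\mathcal E)$, $\mathcal V$ a finite set of nodes, $\mathcal E$ a finite set of hyperedges, each $e$ with tail $\mathrm{tail}(e)\in\mathcal V$ and head $\mathrm{head}(e)\subseteq\mathcal V$, without directed cycles. A connection constraint $\mathsf M=(\mathcal S,O,D)$: finite source index set $\mathcal S$, $O:\mathcal S\to2^{\mathcal V}$ (where source $s$ is available), $D:\mathcal S\to2^{\mathcal V}$ (sinks of $s$). $\mathsf P=(\mathsf G,\mathsf M)$. Sources are imaginary edges with $\mathrm{head}(s)=O(s)$; $\mathrm{in}(e)=\{f\in\mathcal S\cup\mathcal E:\mathrm{tail}(e)\in\mathrm{head}(f)\}$, $\mathrm{in}(u)=\{f\in\mathcal S\cup\mathcal E:u\in\mathrm{head}(f)\}$. A $q$-linear network code is a family of random variables $\{Y_f:f\in\mathcal S\cup\mathcal E\}$ where each $Y_s$ is a row vector over $GF(q)$ with entries independent and uniform over $GF(q)$, the $Y_s$ are mutually independent, and each $Y_e$ is a row vector over $GF(q)$ that is a $GF(q)$-linear function of $(Y_f:f\in\mathrm{in}(e))$. $\mathrm{SP}(X)$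 is the support of $X$. A rate-capacity tuple $(\lambda,\omega)$ ($\lambda:\mathcal S\to\mathbb R_{\ge0}$, $\omega:\mathcal E\to\mathbb R_{\ge0}$) is $0$-achievable by $q$-linear network codes if there exist $q$-linear network codes $\{Y^n_f\}$ and $c_n>0$ with $\lim_nc_n\log|\mathrm{SP}(Y^n_s)|\ge\lambda(s)$, $\lim_nc_n\log|\mathrm{SP}(Y^n_e)|\le\omega(e)$, and $H(Y^n_s\mid Y^n_f,f\in\mathrm{in}(u))=0$ for all $n$, $s$, $u\in D(s)$. $\mathcal H[\mathcal S\cup\mathcal E]$ is the set of real functions on subsets of $\mathcal S\cup\mathcal E$, $h(\alpha\mid\beta)=h(\alpha\cup\beta)-h(\beta)$. $h$ is $q$-representable if there are subspaces $\mathbb U_i$ ($i\in\mathcal S\cup\mathcal E$) of a finite-dimensional $GF(q)$-vector space with $h(\alpha)=\dim\langle\mathbb U_i:i\in\alpha\rangle$ for all $\alpha$. $\mathcal C_I(\mathsf P)=\{h:h(\mathcal S)=\sum_sh(s)\}$, $\mathcal C_T(\mathsf P)=\{h:h(e\mid\mathrm{in}(e))=0\ \forall e\in\mathcal E\}$, $\mathcal C_D(\mathsf P)=\{h:h(s\mid\mathrm{in}(u))=0\ \forall s,u\in D(s)\}$. $\mathrm{proj}_{\mathsf P}[h]=(h(s),s\in\mathcal S;h(e),e\in\mathcal E)$. *)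

theory Defs
  imports "HOL-Analysis.Analysis"
begin

text \<open>Networks. Nodes have type 'v, hyperedges type 'e, source indices type 's.
  Sources and edges together are represented by the sum type ('s + 'e):
  Inl s is the (imaginary) source edge s, Inr e the hyperedge e.\<close>

definition is_network ::
  "'v set \<Rightarrow> 'e set \<Rightarrow> ('e \<Rightarrow> 'v) \<Rightarrow> ('e \<Rightarrow> 'v set) \<Rightarrow> bool" where
  "is_network V E tailE headE \<longleftrightarrow>
     finite V \<and> finite E \<and>
     (\<forall>e\<in>E. tailE e \<in> V \<and> headE e \<subseteq> V) \<and>
     acyclic {(tailE e, v) | e v. e \<in> E \<and> v \<in> headE e}"

definition is_connection_constraint ::
  "'v set \<Rightarrow> 's set \<Rightarrow> ('s \<Rightarrow> 'v set) \<Rightarrow> ('s \<Rightarrow> 'v set) \<Rightarrow> bool" where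
  "is_connection_constraint V S Orig D \<longleftrightarrow>
     finite S \<and> (\<forall>s\<in>S. Orig s \<subseteq> V \<and> D s \<subseteq> V)"

text \<open>The ground set S \<union> E.\<close>
definition ground :: "'s set \<Rightarrow> 'e set \<Rightarrow> ('s + 'e) set" where
  "ground S E = Inl ` S \<union> Inr ` E"

text \<open>Heads of sources and edges: head(s) = Orig(s).\<close>
fun headx :: "('s \<Rightarrow> 'v set) \<Rightarrow> ('e \<Rightarrow> 'v set) \<Rightarrow> ('s + 'e) \<Rightarrow> 'v set" where
  "headx Orig headE (Inl s) = Orig s"
| "headx Orig headE (Inr e) = headE e"

text \<open>in(e) for an edge e, and in(u) for a node u.\<close>
definition in_edge ::
  "'s set \<Rightarrow> 'e set \<Rightarrow> ('e \<Rightarrow> 'v) \<Rightarrow> ('e \<Rightarrow> 'v set) \<Rightarrow> ('s \<Rightarrow> 'v set) \<Rightarrow> 'e \<Rightarrow> ('s + 'e) set" where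
  "in_edge S E tailE headE Orig e = {f \<in> ground S E. tailE e \<in> headx Orig headE f}"

definition in_node ::
  "'s set \<Rightarrow> 'e set \<Rightarrow> ('e \<Rightarrow> 'v set) \<Rightarrow> ('s \<Rightarrow> 'v set) \<Rightarrow> 'v \<Rightarrow> ('s + 'e) set" where
  "in_node S E headE Orig u = {f \<in> ground S E. u \<in> headx Orig headE f}"

text \<open>Polymatroid-type regions. h is a real function on subsets of S \<union> E;
  h(a | b) = h(a \<union> b) - h(b).\<close>

definition C_I :: "'s set \<Rightarrow> (('s + 'e) set \<Rightarrow> real) \<Rightarrow> bool" where
  "C_I S h \<longleftrightarrow> h (Inl ` S) = (\<Sum>s\<in>S. h {Inl s})"

definition C_T ::
  "'s set \<Rightarrow> 'e set \<Rightarrow> ('e \<Rightarrow> 'v) \<Rightarrow> ('e \<Rightarrow> 'v set) \<Rightarrow> ('s \<Rightarrow> 'v set)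
   \<Rightarrow> (('s + 'e) set \<Rightarrow> real) \<Rightarrow> bool" where
  "C_T S E tailE headE Orig h \<longleftrightarrow>
     (\<forall>e\<in>E. h ({Inr e} \<union> in_edge S E tailE headE Orig e) - h (in_edge S E tailE headE Orig e) = 0)"

definition C_D ::
  "'s set \<Rightarrow> 'e set \<Rightarrow> ('e \<Rightarrow> 'v set) \<Rightarrow> ('s \<Rightarrow> 'v set) \<Rightarrow> ('s \<Rightarrow> 'v set)
   \<Rightarrow> (('s + 'e) set \<Rightarrow> real) \<Rightarrow> bool" where
  "C_D S E headE Orig D h \<longleftrightarrow>
     (\<forall>s\<in>S. \<forall>u\<in>D s. h ({Inl s} \<union> in_node S E headE Orig u) - h (in_node S E headE Orig u) = 0)"

text \<open>q-representability, with q = CARD('k) and the ambient finite-dimensional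
  GF(q)-space taken to be 'k^'n.\<close>
definition q_representable_by ::
  "'s set \<Rightarrow> 'e set \<Rightarrow> (('s + 'e) set \<Rightarrow> real) \<Rightarrow> (('s + 'e) \<Rightarrow> ('k::field ^ 'n::finite) set) \<Rightarrow> bool" where
  "q_representable_by S E h U \<longleftrightarrow>
     (\<forall>i\<in>ground S E. vec.subspace (U i)) \<and>
     (\<forall>\<alpha>\<subseteq>ground S E. h \<alpha> = real (vec.dim (\<Union>i\<in>\<alpha>. U i)))"

text \<open>q-linear network codes (q = CARD('k)). The joint source message is an
  element x of the message space: x s is the row vector of length k s (entries
  beyond position k s are 0) carried by source s. Drawing x uniformly from the
  message space makes the Y_s independent, each with i.i.d. uniform entries.
  Y f x is the value of the random variable Y_f at outcome x; vectors are
  encoded as functions nat => 'k, zero beyond their length.\<close>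

definition msg_space :: "'s set \<Rightarrow> ('s \<Rightarrow> nat) \<Rightarrow> ('s \<Rightarrow> nat \<Rightarrow> 'k::zero) set" where
  "msg_space S k = {x. \<forall>s j. (s \<notin> S \<or> k s \<le> j) \<longrightarrow> x s j = 0}"

fun vlen :: "('s \<Rightarrow> nat) \<Rightarrow> ('e \<Rightarrow> nat) \<Rightarrow> ('s + 'e) \<Rightarrow> nat" where
  "vlen k m (Inl s) = k s"
| "vlen k m (Inr e) = m e"

text \<open>Y is a q-linear network code with source lengths k and edge lengths m:
  Y_s is the source message and each Y_e is a GF(q)-linear function (given by
  matrices A) of (Y_f : f \<in> in(e)).\<close>
definition is_linear_code ::
  "'s set \<Rightarrow> 'e set \<Rightarrow> ('e \<Rightarrow> 'v) \<Rightarrow> ('e \<Rightarrow> 'v set) \<Rightarrow> ('s \<Rightarrow> 'v set)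
   \<Rightarrow> ('s \<Rightarrow> nat) \<Rightarrow> ('e \<Rightarrow> nat)
   \<Rightarrow> (('s + 'e) \<Rightarrow> ('s \<Rightarrow> nat \<Rightarrow> 'k::{field,finite}) \<Rightarrow> (nat \<Rightarrow> 'k)) \<Rightarrow> bool" where
  "is_linear_code S E tailE headE Orig k m Y \<longleftrightarrow>
     (\<forall>s\<in>S. \<forall>x\<in>msg_space S k. Y (Inl s) x = x s) \<and>
     (\<forall>e\<in>E. \<exists>A :: ('s + 'e) \<Rightarrow> nat \<Rightarrow> nat \<Rightarrow> 'k.
        \<forall>x\<in>msg_space S k. \<forall>j.
          Y (Inr e) x j =
            (if j < m e
             then (\<Sum>f\<in>in_edge S E tailE headE Orig e. \<Sum>i<vlen k m f. Y f x i * A f i j)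
             else 0))"

text \<open>Support SP(Y_f) of Y_f (the message is uniform with full support).\<close>
definition SP :: "'s set \<Rightarrow> ('s \<Rightarrow> nat) \<Rightarrow> (('s + 'e) \<Rightarrow> ('s \<Rightarrow> nat \<Rightarrow> 'k::zero) \<Rightarrow> 'b)
   \<Rightarrow> ('s + 'e) \<Rightarrow> 'b set" where
  "SP S k Y f = Y f ` msg_space S k"

text \<open>H(Y_s | Y_f, f \<in> F) = 0. Since the underlying message is uniform on the
  finite message space (full support), this holds iff Y_s is a function of
  (Y_f : f \<in> F) on the message space.\<close>
definition cond_entropy_zero ::
  "'s set \<Rightarrow> ('s \<Rightarrow> nat) \<Rightarrow> (('s + 'e) \<Rightarrow> ('s \<Rightarrow> nat \<Rightarrow> 'k::zero) \<Rightarrow> 'b)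
   \<Rightarrow> ('s + 'e) \<Rightarrow> ('s + 'e) set \<Rightarrow> bool" where
  "cond_entropy_zero S k Y g F \<longleftrightarrow>
     (\<forall>x\<in>msg_space S k. \<forall>x'\<in>msg_space S k.
        (\<forall>f\<in>F. Y f x = Y f x') \<longrightarrow> Y g x = Y g x')"

text \<open>0-achievability of (\<lambda>,\<omega>) by q-linear network codes, q = CARD('k).\<close>
definition zero_achievable_linear ::
  "'k::{field,finite} itself \<Rightarrow> 's set \<Rightarrow> 'e set \<Rightarrow> ('e \<Rightarrow> 'v) \<Rightarrow> ('e \<Rightarrow> 'v set)
   \<Rightarrow> ('s \<Rightarrow> 'v set) \<Rightarrow> ('s \<Rightarrow> 'v set) \<Rightarrow> ('s \<Rightarrow> real) \<Rightarrow> ('e \<Rightarrow> real) \<Rightarrow> bool" where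
  "zero_achievable_linear TYPE('k) S E tailE headE Orig D lam om \<longleftrightarrow>
     (\<exists>(k :: nat \<Rightarrow> 's \<Rightarrow> nat) (m :: nat \<Rightarrow> 'e \<Rightarrow> nat)
        (Y :: nat \<Rightarrow> ('s + 'e) \<Rightarrow> ('s \<Rightarrow> nat \<Rightarrow> 'k) \<Rightarrow> (nat \<Rightarrow> 'k)) (c :: nat \<Rightarrow> real).
       (\<forall>n. is_linear_code S E tailE headE Orig (k n) (m n) (Y n)) \<and>
       (\<forall>n. c n > 0) \<and>
       (\<forall>s\<in>S. \<exists>L. (\<lambda>n. c n * ln (real (card (SP S (k n) (Y n) (Inl s))))) \<longlonglongrightarrow> L
                 \<and> L \<ge> lam s) \<and>
       (\<forall>e\<in>E. \<exists>L. (\<lambda>n. c n * ln (real (card (SP S (k n) (Y n) (Inr e))))) \<longlonglongrightarrow> L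
                 \<and> L \<le> om e) \<and>
       (\<forall>n. \<forall>s\<in>S. \<forall>u\<in>D s. cond_entropy_zero S (k n) (Y n) (Inl s) (in_node S E headE Orig u)))"

text \<open>proj_P[h].\<close>
definition proj_src :: "(('s + 'e) set \<Rightarrow> real) \<Rightarrow> 's \<Rightarrow> real" where
  "proj_src h s = h {Inl s}"

definition proj_edge :: "(('s + 'e) set \<Rightarrow> real) \<Rightarrow> 'e \<Rightarrow> real" where
  "proj_edge h e = h {Inr e}"

end

theory Submission
  imports Defs
begin



lemma span_dim_incl:
  assumes "vec.dim (A \<union> B) = vec.dim B"
  shows "A \<subseteq> vec.span B"
proof -
  have "vec.span B = vec.span (A \<union> B)"
    by (rule vec.dim_eq_span) (use assms in auto)
  then show ?thesis using vec.span_superset[of "A \<union> B"] by auto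
qed

lemma coeffs_exist:
  fixes b :: "'g \<Rightarrow> nat \<Rightarrow> 'k::field ^ 'n::finite"
  assumes "finite F" "v \<in> vec.span (\<Union>f\<in>F. b f ` {..<n f})"
  shows "\<exists>c. v = (\<Sum>f\<in>F. \<Sum>i<n f. c f i *s b f i)"
proof (rule vec.span_induct[OF assms(2)])
  fix x assume "x \<in> (\<Union>f\<in>F. b f ` {..<n f})"
  then obtain f0 i0 where f0: "f0 \<in> F" "i0 < n f0" "x = b f0 i0" by auto
  let ?c = "\<lambda>f i. if f = f0 then (if i = i0 then 1 else 0) else (0::'k)"
  have "(\<Sum>f\<in>F. \<Sum>i<n f. ?c f i *s b f i) = (\<Sum>f\<in>F. if f = f0 then b f0 i0 else 0)"
  proof (rule sum.cong)
    fix f assume "f \<in> F"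
    show "(\<Sum>i<n f. ?c f i *s b f i) = (if f = f0 then b f0 i0 else 0)"
    proof (cases "f = f0")
      case True
      have "(\<Sum>i<n f. ?c f i *s b f i) = (\<Sum>i<n f0. if i = i0 then b f0 i else 0)"
        using True by (intro sum.cong) auto
      also have "\<dots> = b f0 i0" using f0 by (simp add: sum.delta)
      finally show ?thesis using True by simp
    next
      case False
      then show ?thesis by simp
    qed
  qed simp
  also have "\<dots> = x" using f0 assms(1) by simp
  finally have "x = (\<Sum>f\<in>F. \<Sum>i<n f. ?c f i *s b f i)" by simp
  then show "\<exists>c. x = (\<Sum>f\<in>F. \<Sum>i<n f. c f i *s b f i)" by (rule exI[of _ ?c])
next
  show "vec.subspace (Collect (\<lambda>v. \<exists>c. v = (\<Sum>f\<in>F. \<Sum>i<n f. c f i *s b f i)))" unfolding vec.subspace_def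
  proof (intro conjI allI impI ballI)
    show "0 \<in> Collect (\<lambda>v. \<exists>c. v = (\<Sum>f\<in>F. \<Sum>i<n f. c f i *s b f i))"
      by (rule CollectI, rule exI[of _ "\<lambda>f i. 0"]) simp
  next
    fix x y assume "x \<in> Collect (\<lambda>v. \<exists>c. v = (\<Sum>f\<in>F. \<Sum>i<n f. c f i *s b f i))"
      "y \<in> Collect (\<lambda>v. \<exists>c. v = (\<Sum>f\<in>F. \<Sum>i<n f. c f i *s b f i))"
    then obtain c1 c2 where "x = (\<Sum>f\<in>F. \<Sum>i<n f. c1 f i *s b f i)" "y = (\<Sum>f\<in>F. \<Sum>i<n f. c2 f i *s b f i)" by auto
    then have "x + y = (\<Sum>f\<in>F. \<Sum>i<n f. (c1 f i + c2 f i) *s b f i)"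
      by (simp add: vec.scale_left_distrib sum.distrib)
    then show "x + y \<in> Collect (\<lambda>v. \<exists>c. v = (\<Sum>f\<in>F. \<Sum>i<n f. c f i *s b f i))"
      unfolding mem_Collect_eq by (rule exI[of _ "\<lambda>f i. c1 f i + c2 f i"])
  next
    fix r x assume "x \<in> Collect (\<lambda>v. \<exists>c. v = (\<Sum>f\<in>F. \<Sum>i<n f. c f i *s b f i))"
    then obtain c1 where "x = (\<Sum>f\<in>F. \<Sum>i<n f. c1 f i *s b f i)" by auto
    then have "r *s x = (\<Sum>f\<in>F. \<Sum>i<n f. (r * c1 f i) *s b f i)"
      by (simp add: vec.scale_sum_right)
    then show "r *s x \<in> Collect (\<lambda>v. \<exists>c. v = (\<Sum>f\<in>F. \<Sum>i<n f. c f i *s b f i))"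
      unfolding mem_Collect_eq by (rule exI[of _ "\<lambda>f i. r * c1 f i"])
  qed
qed


lemma card_zero_beyond:
  fixes d :: nat
  shows "card {v :: nat \<Rightarrow> 'k::{finite,zero}. \<forall>j. d \<le> j \<longrightarrow> v j = (0::'k)} = CARD('k) ^ d"
    and "finite {v :: nat \<Rightarrow> 'k::{finite,zero}. \<forall>j. d \<le> j \<longrightarrow> v j = (0::'k)}"
proof -
  let ?g = "\<lambda>w j. if j < d then w j else (0::'k)"
  have eq: "{v :: nat \<Rightarrow> 'k. \<forall>j. d \<le> j \<longrightarrow> v j = 0} = ?g ` ({..<d} \<rightarrow>\<^sub>E UNIV)"
  proof (intro set_eqI iffI)
    fix v :: "nat \<Rightarrow> 'k" assume "v \<in> {v. \<forall>j. d \<le> j \<longrightarrow> v j = 0}"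
    then show "v \<in> ?g ` ({..<d} \<rightarrow>\<^sub>E UNIV)"
      by (intro image_eqI[where x="restrict v {..<d}"]) (auto simp: fun_eq_iff)
  next
    fix v assume "v \<in> ?g ` ({..<d} \<rightarrow>\<^sub>E UNIV)"
    then show "v \<in> {v :: nat \<Rightarrow> 'k. \<forall>j. d \<le> j \<longrightarrow> v j = 0}" by force
  qed
  have inj: "inj_on ?g ({..<d} \<rightarrow>\<^sub>E UNIV)"
  proof (rule inj_onI)
    fix w w' assume "w \<in> ({..<d} \<rightarrow>\<^sub>E (UNIV::'k set))" "w' \<in> ({..<d} \<rightarrow>\<^sub>E (UNIV::'k set))" "?g w = ?g w'"
    show "w = w'"
    proof (rule PiE_ext)
      fix i assume "i \<in> {..<d}"
      then show "w i = w' i" using fun_cong[OF \<open>?g w = ?g w'\<close>, of i] by simp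
    qed fact+
  qed
  show "card {v :: nat \<Rightarrow> 'k. \<forall>j. d \<le> j \<longrightarrow> v j = 0} = CARD('k) ^ d"
    unfolding eq by (simp add: card_image[OF inj] card_PiE)
  show "finite {v :: nat \<Rightarrow> 'k. \<forall>j. d \<le> j \<longrightarrow> v j = 0}"
    unfolding eq by (simp add: finite_PiE)
qed



theorem proposition4:
  fixes V :: "'v set" and E :: "'e set" and tailE :: "'e \<Rightarrow> 'v" and headE :: "'e \<Rightarrow> 'v set"
    and S :: "'s set" and Orig :: "'s \<Rightarrow> 'v set" and D :: "'s \<Rightarrow> 'v set"
    and h :: "('s + 'e) set \<Rightarrow> real"
    and U :: "('s + 'e) \<Rightarrow> ('k::{field,finite} ^ 'n::finite) set"
  assumes "is_network V E tailE headE"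
    and "is_connection_constraint V S Orig D"
    and "q_representable_by S E h U"
    and "C_I S h"
    and "C_T S E tailE headE Orig h"
    and "C_D S E headE Orig D h"
  shows "zero_achievable_linear TYPE('k) S E tailE headE Orig D (proj_src h) (proj_edge h)"
proof -
  have finS: "finite S" using assms(2) by (simp add: is_connection_constraint_def)
  have finE: "finite E" using assms(1) by (simp add: is_network_def)
  have fing: "finite (ground S E)" using finS finE by (simp add: ground_def)
  have subsp: "\<And>i. i \<in> ground S E \<Longrightarrow> vec.subspace (U i)"
    using assms(3) by (simp add: q_representable_by_def)
  have hval: "\<And>\<alpha>. \<alpha> \<subseteq> ground S E \<Longrightarrow> h \<alpha> = real (vec.dim (\<Union>i\<in>\<alpha>. U i))"
    using assms(3) by (simp add: q_representable_by_def)
  have "\<forall>g. \<exists>B. B \<subseteq> U g \<and> vec.independent B \<and> U g \<subseteq> vec.span B \<and> card B = vec.dim (U g)"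
    by (meson vec.basis_exists)
  from choice[OF this] obtain Bs where Bs: "\<And>g. Bs g \<subseteq> U g" "\<And>g. vec.independent (Bs g)"
    "\<And>g. U g \<subseteq> vec.span (Bs g)" "\<And>g. card (Bs g) = vec.dim (U g)" by blast
  have finBs: "\<And>g. finite (Bs g)" using Bs(2) vec.finiteI_independent by blast
  define d where "d g = card (Bs g)" for g
  have "\<forall>g. \<exists>bb. bij_betw bb {..<d g} (Bs g)"
    using ex_bij_betw_nat_finite[OF finBs] by (simp add: d_def atLeast0LessThan)
  from choice[OF this] obtain b where bij: "\<And>g. bij_betw (b g) {..<d g} (Bs g)" by blast
  have bimg: "\<And>g. b g ` {..<d g} = Bs g" using bij by (simp add: bij_betw_def)
  have spanBs: "\<And>g. g \<in> ground S E \<Longrightarrow> vec.span (Bs g) = U g"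
    using Bs subsp by (simp add: vec.span_subspace)
  have dU: "\<And>g. vec.dim (U g) = d g" using Bs(4) by (simp add: d_def)
  have hsing: "\<And>g. g \<in> ground S E \<Longrightarrow> h {g} = real (d g)"
    using hval dU by simp
  have bU: "\<And>g j. j < d g \<Longrightarrow> b g j \<in> U g" using bimg Bs(1) by blast

  \<comment> \<open>independence of the source bases\<close>
  define I where "I = Sigma S (\<lambda>s. {..<d (Inl s)})"
  define bs where "bs = (\<lambda>p. b (Inl (fst p)) (snd p))"
  define BS where "BS = bs ` I"
  have finI: "finite I" using finS by (simp add: I_def)
  have finBS: "finite BS" using finI by (simp add: BS_def)
  have UBS: "(\<Union>s\<in>S. U (Inl s)) \<subseteq> vec.span BS"
  proof -
    have "U (Inl s) \<subseteq> vec.span BS" if "s \<in> S" for s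
    proof -
      have "Bs (Inl s) \<subseteq> BS" unfolding BS_def bs_def I_def using that bimg[of "Inl s"] by force
      then show ?thesis using Bs(3)[of "Inl s"] vec.span_mono by blast
    qed
    then show ?thesis by blast
  qed
  have "h (Inl ` S) = (\<Sum>s\<in>S. h {Inl s})" using assms(4) by (simp add: C_I_def)
  also have "\<dots> = (\<Sum>s\<in>S. real (d (Inl s)))" using hsing by (simp add: ground_def)
  also have "\<dots> = real (card I)" by (simp add: I_def finS)
  finally have "real (vec.dim (\<Union>s\<in>S. U (Inl s))) = real (card I)"
    using hval[of "Inl ` S"] by (simp add: ground_def)
  then have dimI: "vec.dim (\<Union>s\<in>S. U (Inl s)) = card I" by simp
  have "vec.dim (\<Union>s\<in>S. U (Inl s)) \<le> vec.dim BS" using UBS by (rule vec.dim_mono)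
  moreover have "vec.dim BS \<le> card BS" using finBS vec.span_superset by (rule vec.dim_le_card[rotated])
  moreover have "card BS \<le> card I" unfolding BS_def by (rule card_image_le[OF finI])
  ultimately have cBS: "card BS = card I" and dBS: "card BS \<le> vec.dim BS" using dimI by auto
  have injbs: "inj_on bs I" using cBS finI by (simp add: BS_def inj_on_iff_eq_card)
  have indBS: "vec.independent BS"
    by (rule vec.card_le_dim_spanning[OF order_refl vec.span_superset finBS dBS])

  define Bx where "Bx = vec.extend_basis BS"
  have indBx: "vec.independent Bx" using indBS by (simp add: Bx_def vec.independent_extend_basis)
  have BSBx: "BS \<subseteq> Bx" using indBS by (simp add: Bx_def vec.extend_basis_superset)
  have spBx: "\<And>v. v \<in> vec.span Bx" using indBS by (simp add: Bx_def)
  define R where "R = vec.representation Bx"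
  define \<psi> where "\<psi> x v = (\<Sum>p\<in>I. R v (bs p) * x (fst p) (snd p))" for x :: "'s \<Rightarrow> nat \<Rightarrow> 'k" and v

  have psi_basis: "\<psi> x (bs p) = x (fst p) (snd p)" if "p \<in> I" for x p
  proof -
    have "bs p \<in> Bx" using that BSBx by (auto simp: BS_def)
    then have Rb: "R (bs p) = (\<lambda>w. if w = bs p then 1 else 0)"
      unfolding R_def by (rule vec.representation_basis[OF indBx])
    have "\<psi> x (bs p) = (\<Sum>q\<in>I. if q = p then x (fst q) (snd q) else 0)"
      unfolding \<psi>_def Rb
    proof (rule sum.cong)
      fix q assume "q \<in> I"
      then have "(bs q = bs p) = (q = p)" using that injbs by (auto dest: inj_onD)
      then show "(if bs q = bs p then 1 else 0) * x (fst q) (snd q) = (if q = p then x (fst q) (snd q) else 0)"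
        by simp
    qed simp
    also have "\<dots> = x (fst p) (snd p)" using that finI by simp
    finally show ?thesis .
  qed

  have psi_lin: "\<psi> x (\<Sum>f\<in>F. \<Sum>i<n f. c f i *s w f i) = (\<Sum>f\<in>F. \<Sum>i<n f. c f i * \<psi> x (w f i))"
    for x F n c w
  proof -
    have "R (\<Sum>f\<in>F. \<Sum>i<n f. c f i *s w f i) = (\<lambda>bb. \<Sum>f\<in>F. \<Sum>i<n f. c f i * R (w f i) bb)"
      unfolding R_def
      by (simp add: vec.representation_sum[OF indBx] spBx vec.representation_scale[OF indBx])
    then have "\<psi> x (\<Sum>f\<in>F. \<Sum>i<n f. c f i *s w f i) =
        (\<Sum>p\<in>I. (\<Sum>f\<in>F. \<Sum>i<n f. c f i * R (w f i) (bs p)) * x (fst p) (snd p))"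
      by (simp add: \<psi>_def)
    also have "\<dots> = (\<Sum>p\<in>I. \<Sum>f\<in>F. \<Sum>i<n f. c f i * (R (w f i) (bs p) * x (fst p) (snd p)))"
      by (simp add: sum_distrib_right mult.assoc)
    also have "\<dots> = (\<Sum>f\<in>F. \<Sum>p\<in>I. \<Sum>i<n f. c f i * (R (w f i) (bs p) * x (fst p) (snd p)))"
      by (rule sum.swap)
    also have "\<dots> = (\<Sum>f\<in>F. \<Sum>i<n f. \<Sum>p\<in>I. c f i * (R (w f i) (bs p) * x (fst p) (snd p)))"
      by (rule sum.cong[OF refl], rule sum.swap)
    also have "\<dots> = (\<Sum>f\<in>F. \<Sum>i<n f. c f i * \<psi> x (w f i))"
      by (simp add: \<psi>_def sum_distrib_left)
    finally show ?thesis .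
  qed

  define k where "k s = d (Inl s)" for s :: 's
  define m where "m e = d (Inr e)" for e :: 'e
  define Y where "Y g x = (case g of Inl s \<Rightarrow> x s
      | Inr e \<Rightarrow> (\<lambda>j. if j < d (Inr e) then \<psi> x (b (Inr e) j) else 0))"
    for g :: "'s + 'e" and x :: "'s \<Rightarrow> nat \<Rightarrow> 'k"
  have vl: "vlen k m g = d g" for g by (cases g) (simp_all add: k_def m_def)
  have key: "Y g x j = (if j < d g then \<psi> x (b g j) else 0)"
    if "g \<in> ground S E" "x \<in> msg_space S k" for g x j
  proof (cases g)
    case (Inl s)
    then have sS: "s \<in> S" using that(1) by (auto simp: ground_def)
    show ?thesis
    proof (cases "j < d g")
      case True
      then have "(s, j) \<in> I" using sS Inl by (simp add: I_def)
      from psi_basis[OF this, of x] show ?thesis using True Inl by (simp add: Y_def bs_def)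
    next
      case False
      then show ?thesis using that(2) Inl by (simp add: Y_def msg_space_def k_def)
    qed
  next
    case (Inr e)
    then show ?thesis by (simp add: Y_def)
  qed
  have reduce: "\<exists>c. \<forall>x\<in>msg_space S k. \<psi> x (b g j) = (\<Sum>f\<in>F. \<Sum>i<d f. Y f x i * c f i)"
    if "F \<subseteq> ground S E" "U g \<subseteq> vec.span (\<Union>f\<in>F. U f)" "j < d g" for g F j
  proof -
    have finF: "finite F" using that(1) fing finite_subset by blast
    have "(\<Union>f\<in>F. U f) \<subseteq> vec.span (\<Union>f\<in>F. b f ` {..<d f})"
    proof -
      have "U f \<subseteq> vec.span (\<Union>f\<in>F. b f ` {..<d f})" if "f \<in> F" for f
      proof -
        have "b f ` {..<d f} \<subseteq> (\<Union>f\<in>F. b f ` {..<d f})" using that by blast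
        then have "vec.span (Bs f) \<subseteq> vec.span (\<Union>f\<in>F. b f ` {..<d f})"
          using vec.span_mono bimg[of f] by metis
        then show ?thesis using Bs(3)[of f] by (rule order_trans[rotated])
      qed
      then show ?thesis by blast
    qed
    then have "vec.span (\<Union>f\<in>F. U f) \<subseteq> vec.span (\<Union>f\<in>F. b f ` {..<d f})"
      using vec.span_mono vec.span_span by metis
    then have "b g j \<in> vec.span (\<Union>f\<in>F. b f ` {..<d f})" using bU[OF that(3)] that(2) by blast
    from coeffs_exist[OF finF this] obtain c where c: "b g j = (\<Sum>f\<in>F. \<Sum>i<d f. c f i *s b f i)" by blast
    have "\<psi> x (b g j) = (\<Sum>f\<in>F. \<Sum>i<d f. Y f x i * c f i)" if "x \<in> msg_space S k" for x
    proof -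
      have "\<psi> x (b g j) = (\<Sum>f\<in>F. \<Sum>i<d f. c f i * \<psi> x (b f i))" unfolding c by (rule psi_lin)
      also have "\<dots> = (\<Sum>f\<in>F. \<Sum>i<d f. Y f x i * c f i)"
      proof (intro sum.cong refl)
        fix f i assume "f \<in> F" "i \<in> {..<d f}"
        then show "c f i * \<psi> x (b f i) = Y f x i * c f i"
          using key[of f x i] \<open>F \<subseteq> ground S E\<close> that by (auto simp: mult.commute)
      qed
      finally show ?thesis .
    qed
    then show ?thesis by blast
  qed
  have dimincl: "A \<subseteq> vec.span B" if "h (X \<union> F) - h F = 0" "X \<union> F \<subseteq> ground S E"
     "(\<Union>i\<in>X \<union> F. U i) = A \<union> B" "(\<Union>i\<in>F. U i) = B" for A B X F
  proof -
    have "real (vec.dim (A \<union> B)) = real (vec.dim B)"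
      using that hval[of "X \<union> F"] hval[of F] by auto
    then show ?thesis by (intro span_dim_incl) simp
  qed
  have inE: "in_edge S E tailE headE Orig e \<subseteq> ground S E" for e
    by (auto simp: in_edge_def)
  have inN: "in_node S E headE Orig u \<subseteq> ground S E" for u
    by (auto simp: in_node_def)
  have lincode: "is_linear_code S E tailE headE Orig k m Y"
    unfolding is_linear_code_def
  proof (intro conjI ballI)
    fix s x show "Y (Inl s) x = x s" by (simp add: Y_def)
  next
    fix e assume eE: "e \<in> E"
    let ?F = "in_edge S E tailE headE Orig e"
    have gr: "{Inr e} \<union> ?F \<subseteq> ground S E" using eE inE by (auto simp: ground_def)
    have incl: "U (Inr e) \<subseteq> vec.span (\<Union>f\<in>?F. U f)"
      by (rule dimincl[of "{Inr e}" ?F]) (use assms(5) eE gr in \<open>auto simp: C_T_def\<close>)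
    have "\<forall>j. \<exists>c. j < d (Inr e) \<longrightarrow>
        (\<forall>x\<in>msg_space S k. \<psi> x (b (Inr e) j) = (\<Sum>f\<in>?F. \<Sum>i<d f. Y f x i * c f i))"
      using reduce[OF inE incl] by blast
    from choice[OF this] obtain C where C: "\<And>j x. j < d (Inr e) \<Longrightarrow> x \<in> msg_space S k \<Longrightarrow>
        \<psi> x (b (Inr e) j) = (\<Sum>f\<in>?F. \<Sum>i<d f. Y f x i * C j f i)" by blast
    show "\<exists>A. \<forall>x\<in>msg_space S k. \<forall>j. Y (Inr e) x j =
        (if j < m e then \<Sum>f\<in>?F. \<Sum>i<vlen k m f. Y f x i * A f i j else 0)"
      by (rule exI[of _ "\<lambda>f i j. C j f i"]) (auto simp: vl m_def Y_def C)
  qed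
  have decode: "cond_entropy_zero S k Y (Inl s) (in_node S E headE Orig u)" if "s \<in> S" "u \<in> D s" for s u
    unfolding cond_entropy_zero_def
  proof (intro ballI impI)
    fix x x' assume x: "x \<in> msg_space S k" and x': "x' \<in> msg_space S k"
      and agree: "\<forall>f\<in>in_node S E headE Orig u. Y f x = Y f x'"
    let ?F = "in_node S E headE Orig u"
    have gs: "Inl s \<in> ground S E" using that by (simp add: ground_def)
    have gr: "{Inl s} \<union> ?F \<subseteq> ground S E" using gs inN by auto
    have incl: "U (Inl s) \<subseteq> vec.span (\<Union>f\<in>?F. U f)"
      by (rule dimincl[of "{Inl s}" ?F]) (use assms(6) that gr in \<open>auto simp: C_D_def\<close>)
    have "Y (Inl s) x j = Y (Inl s) x' j" for j
    proof (cases "j < d (Inl s)")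
      case True
      from reduce[OF inN incl True] obtain c where
        c: "\<forall>x\<in>msg_space S k. \<psi> x (b (Inl s) j) = (\<Sum>f\<in>?F. \<Sum>i<d f. Y f x i * c f i)" by blast
      show ?thesis using key[OF gs x, of j] key[OF gs x', of j] c x x' agree True by simp
    next
      case False
      then show ?thesis using key[OF gs x, of j] key[OF gs x', of j] by simp
    qed
    then show "Y (Inl s) x = Y (Inl s) x'" by blast
  qed
  define q where "q = CARD('k)"
  have q2: "2 \<le> q"
  proof -
    have "card {0::'k, 1} \<le> q" unfolding q_def by (rule card_mono) simp_all
    then show ?thesis by simp
  qed
  have lnq: "ln (real q) > 0" using q2 by simp
  define Z where "Z dd = {v :: nat \<Rightarrow> 'k. \<forall>j. dd \<le> j \<longrightarrow> v j = 0}" for dd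
  have cZ: "card (Z dd) = q ^ dd" "finite (Z dd)" for dd
    unfolding Z_def q_def by (rule card_zero_beyond)+
  have val: "1 / ln (real q) * ln (real (q ^ dd)) = real dd" for dd
    using lnq by (simp add: ln_realpow)
  have zmsg: "(\<lambda>_ _. 0) \<in> msg_space S k" by (simp add: msg_space_def)
  have SPs: "SP S k Y (Inl s) = Z (d (Inl s))" if "s \<in> S" for s
  proof (intro set_eqI iffI)
    fix v assume "v \<in> SP S k Y (Inl s)"
    then show "v \<in> Z (d (Inl s))" by (auto simp: SP_def Y_def Z_def msg_space_def k_def)
  next
    fix v assume v: "v \<in> Z (d (Inl s))"
    let ?x = "\<lambda>t. if t = s then v else (\<lambda>_. 0)"
    have "?x \<in> msg_space S k" using v that by (auto simp: msg_space_def Z_def k_def)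
    moreover have "Y (Inl s) ?x = v" by (simp add: Y_def)
    ultimately show "v \<in> SP S k Y (Inl s)" unfolding SP_def by (metis image_eqI)
  qed
  have SPe: "SP S k Y (Inr e) \<subseteq> Z (d (Inr e))" "SP S k Y (Inr e) \<noteq> {}" for e
    using zmsg by (auto simp: SP_def Y_def Z_def)
  show ?thesis
    unfolding zero_achievable_linear_def
  proof (intro exI[of _ "\<lambda>n. k"] exI[of _ "\<lambda>n. m"] exI[of _ "\<lambda>n. Y"]
      exI[of _ "\<lambda>n. 1 / ln (real q)"] conjI allI ballI)
    show "is_linear_code S E tailE headE Orig k m Y" for n by (rule lincode)
    show "0 < 1 / ln (real q)" using lnq by simp
  next
    fix s assume sS: "s \<in> S"
    have "1 / ln (real q) * ln (real (card (SP S k Y (Inl s)))) = proj_src h s"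
      using SPs[OF sS] cZ val hsing[of "Inl s"] sS by (simp add: proj_src_def ground_def q_def)
    then show "\<exists>L. (\<lambda>n. 1 / ln (real q) * ln (real (card (SP S k Y (Inl s))))) \<longlonglongrightarrow> L \<and> proj_src h s \<le> L"
      by auto
  next
    fix e assume eE: "e \<in> E"
    have c1: "card (SP S k Y (Inr e)) \<le> q ^ d (Inr e)"
      using card_mono[OF cZ(2) SPe(1)] cZ(1) by metis
    have c0: "0 < card (SP S k Y (Inr e))"
      using SPe(2) finite_subset[OF SPe(1) cZ(2)] by (simp add: card_gt_0_iff)
    have "ln (real (card (SP S k Y (Inr e)))) \<le> ln (real (q ^ d (Inr e)))"
    proof -
      have r1: "real (card (SP S k Y (Inr e))) \<le> real (q ^ d (Inr e))" using c1 by (rule of_nat_mono)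
      have r0: "0 < real (card (SP S k Y (Inr e)))" using c0 by simp
      show ?thesis by (subst ln_le_cancel_iff) (use r0 r1 in linarith)+
    qed
    then have "1 / ln (real q) * ln (real (card (SP S k Y (Inr e)))) \<le> real (d (Inr e))"
    proof -
      have "ln (real (card (SP S k Y (Inr e)))) / ln (real q) \<le> ln (real (q ^ d (Inr e))) / ln (real q)"
        using \<open>ln (real (card (SP S k Y (Inr e)))) \<le> ln (real (q ^ d (Inr e)))\<close> lnq
        by (intro divide_right_mono) auto
      then show ?thesis using val[of "d (Inr e)"] by simp
    qed
    also have "\<dots> = proj_edge h e" using hsing[of "Inr e"] eE by (simp add: proj_edge_def ground_def)
    finally show "\<exists>L. (\<lambda>n. 1 / ln (real q) * ln (real (card (SP S k Y (Inr e))))) \<longlonglongrightarrow> L \<and> L \<le> proj_edge h e"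
      by auto
  next
    fix n s u assume "s \<in> S" "u \<in> D s"
    then show "cond_entropy_zero S k Y (Inl s) (in_node S E headE Orig u)" by (rule decode)
  qed
qed
end
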